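(* Let $m$ be an odd positive integer and $\ell=\lceil\log_2 m\rceil$. Suppose $m=2^Lh+1$ where $L\geq 3$ is an integer and $h$ is an odd positive integer. Then $\mathfrak K(m)<\left(1+\frac{2^{L+1}+4}{m}\right)2^\ell$.
   Context: The Thue–Morse word is $\mathbf t=\mathbf t_1\mathbf t_2\cdots$ where $\mathbf t_i\in\{0,1\}$ has the parity of the number of $1$'s in the binary expansion of $i-1$. For positive integers $\alpha\le\beta$, $\langle\alpha,\beta\rangle=\mathbf t_\alpha\cdots\mathbf t_\beta$. A $k$-anti-power is a word $w_1\cdots w_k$ with $w_1,\dots,w_k$ pairwise distinct words of equal length. For a positive integer $m$, $\mathfrak K(m)$ is the smallest positive integer $k$ such that the prefix $\langle 1,km\rangle$ of $\mathbf t$ is not a $k$-anti-power. *)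

theory Defs
  imports "HOL-Analysis.Analysis"
begin

fun popcount :: "nat \<Rightarrow> nat" where
  "popcount n = (if n = 0 then 0 else n mod 2 + popcount (n div 2))"

declare popcount.simps[simp del]

(* Thue-Morse word, 1-indexed: t i = parity of popcount (i-1), for i \<ge> 1 *)
definition tm :: "nat \<Rightarrow> nat" where
  "tm i = popcount (i - 1) mod 2"

definition factor :: "nat \<Rightarrow> nat \<Rightarrow> nat list" where
  "factor \<alpha> \<beta> = map tm [\<alpha>..<Suc \<beta>]"

definition prefix_anti_power :: "nat \<Rightarrow> nat \<Rightarrow> bool" where
  "prefix_anti_power k m \<longleftrightarrow>
     (\<forall>i\<in>{1..k}. \<forall>j\<in>{1..k}. i \<noteq> j \<longrightarrow>
        factor ((i-1)*m+1) (i*m) \<noteq> factor ((j-1)*m+1) (j*m))"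

definition KK :: "nat \<Rightarrow> nat" where
  "KK m = (LEAST k. 0 < k \<and> \<not> prefix_anti_power k m)"

end

theory Submission imports Defs begin
lemma pc0[simp]: "popcount 0 = 0"
  by (simp add: popcount.simps)
lemma pc_step: "popcount n = n mod 2 + popcount (n div 2)"
  by (cases "n = 0") (simp, subst popcount.simps, simp)
lemma pc1: "popcount (Suc 0) = 1" by (subst pc_step) simp
lemma pc2: "popcount 2 = 1" by (subst pc_step) (simp add: pc1)
lemma pc3: "popcount 3 = 2" by (subst pc_step) (simp add: pc1)
lemma pc4: "popcount 4 = 1" by (subst pc_step) (simp add: pc2)
lemmas pc_small = pc1 pc2 pc3 pc4
lemma pc_add: "b < 2^k \<Longrightarrow> popcount (2^k*a + b) = popcount a + popcount b"
proof (induction k arbitrary: b)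
  case 0
  then show ?case by simp
next
  case (Suc k)
  have d: "(2^Suc k*a + b) div 2 = 2^k*a + b div 2" by simp
  have md: "(2^Suc k*a + b) mod 2 = b mod 2"
  proof -
    have "2^Suc k*a + b = b + 2*(2^k*a)" by simp
    then show ?thesis by presburger
  qed
  have "b div 2 < 2^k" using Suc.prems by simp
  then have IH: "popcount (2^k*a + b div 2) = popcount a + popcount (b div 2)" by (rule Suc.IH)
  have "popcount (2^Suc k*a + b) = (2^Suc k*a+b) mod 2 + popcount ((2^Suc k*a+b) div 2)" by (rule pc_step)
  also have "\<dots> = b mod 2 + popcount (2^k*a + b div 2)" by (simp only: d md)
  also have "\<dots> = popcount a + (b mod 2 + popcount (b div 2))" using IH by simp
  also have "b mod 2 + popcount (b div 2) = popcount b" by (rule pc_step[symmetric])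
  finally show ?case .
qed


lemma modadd: "(a::nat) mod 2 = b mod 2 \<Longrightarrow> (a + c) mod 2 = (b + c) mod 2"
  by (metis mod_add_left_eq)

lemma block:
  fixes P q x m rho r :: nat
  assumes "m \<le> P" "x*m = P*q + rho" "rho < m" "r < m"
    and "popcount q mod 2 = popcount (q+m) mod 2"
    and "popcount (q+1) mod 2 = popcount (q+1+m) mod 2"
    and "P = 2^l"
  shows "popcount (x*m + r) mod 2 = popcount ((x+P)*m + r) mod 2"
proof -
  have e1: "(x+P)*m + r = P*(q+m) + (rho + r)"
  proof -
    have "(x+P)*m + r = x*m + P*m + r" by (simp add: distrib_right)
    then show ?thesis using assms(2) by (simp add: distrib_left)
  qed
  have e0: "x*m + r = P*q + (rho + r)" using assms(2) by simp
  show ?thesis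
  proof (cases "rho + r < P")
    case True
    then have lt: "rho + r < 2^l" using assms(7) by simp
    have "popcount (x*m + r) = popcount q + popcount (rho+r)"
      unfolding e0 unfolding assms(7) by (rule pc_add[OF lt])
    moreover have "popcount ((x+P)*m + r) = popcount (q+m) + popcount (rho+r)"
      unfolding e1 unfolding assms(7) by (rule pc_add[OF lt])
    ultimately show ?thesis using modadd[OF assms(5)] by simp
  next
    case False
    define s where "s = rho + r - P"
    have s: "s < P" "rho + r = P + s" using False assms(1,3,4) by (auto simp: s_def)
    have lt: "s < 2^l" using s assms(7) by simp
    have f0: "x*m + r = P*(q+1) + s" using e0 s by simp
    have f1: "(x+P)*m + r = P*(q+1+m) + s" using e1 s by simp
    have "popcount (x*m + r) = popcount (q+1) + popcount s"
      unfolding f0 unfolding assms(7) by (rule pc_add[OF lt])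
    moreover have "popcount ((x+P)*m + r) = popcount (q+1+m) + popcount s"
      unfolding f1 unfolding assms(7) by (rule pc_add[OF lt])
    ultimately show ?thesis using modadd[OF assms(6)] by simp
  qed
qed

lemma factor_len: "length (factor a b) = Suc b - a" by (simp add: factor_def del: upt_Suc)
lemma factor_nth: "r < Suc b - a \<Longrightarrow> factor a b ! r = tm (a + r)" by (simp add: factor_def del: upt_Suc)

theorem lemma8:
  fixes m h L :: nat
  assumes "odd m" and "m > 0"
    and "m = 2 ^ L * h + 1" and "L \<ge> 3" and "odd h" and "h > 0"
  shows "real (KK m) < (1 + (2 ^ (L+1) + 4) / real m) * 2 powr (of_int \<lceil>log 2 (real m)\<rceil>)"
proof -
  define l where "l = nat \<lceil>log 2 (real m)\<rceil>"
  define P :: nat where "P = 2^l"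
  have lg: "log 2 (real m) \<ge> 0" using assms(2) by simp
  have Pr: "2 powr (of_int \<lceil>log 2 (real m)\<rceil>) = real P"
    using lg by (simp add: P_def l_def powr_realpow[symmetric])
  have "real m = 2 powr log 2 (real m)" using assms(2) by simp
  also have "\<dots> \<le> 2 powr (of_int \<lceil>log 2 (real m)\<rceil>)" by simp
  finally have mP: "m \<le> P" using Pr by simp
  obtain c :: nat where c: "c = 1 \<or> c = 2" "popcount (h+c) mod 2 = 0"
  proof (cases "popcount (h+1) mod 2 = 0")
    case True then show ?thesis using that[of 1] by simp
  next
    case False
    obtain k where "h = 2*k+1" using assms(5) by (rule oddE)
    then have a: "h + 1 = 2*(k+1)" by simp
    have "popcount (h+1) = popcount (k+1)" using a pc_add[of 0 1 "k+1"] by simp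
    moreover have "popcount (h+2) = popcount (k+1) + 1" using a pc_add[of 1 1 "k+1"] pc_small by simp
    ultimately have "popcount (h+2) mod 2 = 0" using False by presburger
    then show ?thesis using that[of 2] by simp
  qed
  define q where "q = 2^L*c + 2"
  have L4: "(4::nat) < 2^L"
  proof -
    have "(2::nat)^3 \<le> 2^L" using assms(4) by (rule power_increasing) simp
    then show ?thesis by simp
  qed
  have pc_c: "popcount c = 1" using c(1) pc_small by auto
  have h1: "popcount q mod 2 = popcount (q+m) mod 2"
  proof -
    have "popcount q = popcount c + 1" unfolding q_def using pc_add[of 2 L c] L4 pc_small by simp
    moreover have "q + m = 2^L*(h+c) + 3" unfolding q_def assms(3) by (simp add: algebra_simps)
    moreover have "popcount (2^L*(h+c) + 3) = popcount (h+c) + 2" using pc_add[of 3 L "h+c"] L4 pc_small by simp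
    ultimately show ?thesis using pc_c c(2) by simp
  qed
  have h2: "popcount (q+1) mod 2 = popcount (q+1+m) mod 2"
  proof -
    have "q + 1 = 2^L*c + 3" unfolding q_def by simp
    moreover have "popcount (2^L*c + 3) = popcount c + 2" using pc_add[of 3 L c] L4 pc_small by simp
    ultimately have "popcount (q+1) = popcount c + 2" by metis
    moreover have e4: "q + 1 + m = 2^L*(h+c) + 4" unfolding q_def assms(3) by (simp add: algebra_simps)
    moreover have "popcount (2^L*(h+c) + 4) = popcount (h+c) + 1" using pc_add[of 4 L "h+c"] L4 pc_small by simp
    ultimately have "popcount (q+1+m) = popcount (h+c) + 1" by metis
    then show ?thesis using pc_c c(2) \<open>popcount (q+1) = popcount c + 2\<close> by presburger
  qed
  define x where "x = (P*q + m - 1) div m"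
  have xm1: "x*m \<le> P*q + m - 1" using div_mult_mod_eq[of "P*q+m-1" m] unfolding x_def by linarith
  have xm2: "P*q \<le> x*m"
  proof -
    have "P*q + m - 1 < (x+1)*m" unfolding x_def using assms(2)
      by (metis div_mult_mod_eq mod_less_divisor add_less_cancel_left distrib_right mult_1)
    then show ?thesis using assms(2) by (simp add: algebra_simps)
  qed
  define rho where "rho = x*m - P*q"
  have rho: "x*m = P*q + rho" "rho < m" using xm1 xm2 assms(2) unfolding rho_def by auto
  define i where "i = x + 1"
  define j where "j = x + 1 + P"
  have ei: "(i-1)*m+1 = x*m+1" "i*m = x*m+m" unfolding i_def by simp_all
  have ej: "(j-1)*m+1 = (x+P)*m+1" "j*m = (x+P)*m+m" unfolding j_def by (simp_all add: algebra_simps)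
  have blocks: "factor ((i-1)*m+1) (i*m) = factor ((j-1)*m+1) (j*m)"
    unfolding ei ej
  proof (rule nth_equalityI)
    show "length (factor (x*m+1) (x*m+m)) = length (factor ((x+P)*m+1) ((x+P)*m+m))"
      by (simp add: factor_len)
  next
    fix r assume "r < length (factor (x*m+1) (x*m+m))"
    then have r: "r < m" by (simp add: factor_len)
    have "popcount (x*m + r) mod 2 = popcount ((x+P)*m + r) mod 2"
      using block[OF mP rho r h1 h2 P_def] .
    moreover have "factor (x*m+1) (x*m+m) ! r = tm (x*m+1+r)" using r by (simp add: factor_nth)
    moreover have "factor ((x+P)*m+1) ((x+P)*m+m) ! r = tm ((x+P)*m+1+r)" using r by (simp add: factor_nth)
    ultimately show "factor (x*m+1) (x*m+m) ! r = factor ((x+P)*m+1) ((x+P)*m+m) ! r"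
      unfolding tm_def by simp
  qed
  have Ppos: "P > 0" unfolding P_def by simp
  have "\<not> prefix_anti_power j m"
  proof -
    have "i \<in> {1..j}" "j \<in> {1..j}" "i \<noteq> j" using Ppos unfolding i_def j_def by auto
    then show ?thesis unfolding prefix_anti_power_def using blocks by blast
  qed
  then have KK: "KK m \<le> j" unfolding KK_def by (intro Least_le) (simp add: j_def)
  have key: "(x+1)*m < (q+2)*P"
  proof -
    have "(x+1)*m \<le> P*q + 2*m - 1" using xm1 by simp
    also have "\<dots> < (q+2)*P" using mP assms(2) by (simp add: algebra_simps)
    finally show ?thesis .
  qed
  have q2: "q + 2 \<le> 2^(L+1) + 4" unfolding q_def using c(1) by auto
  have "real (KK m) \<le> real j" using KK by simp
  also have "\<dots> = real (x+1) + real P" unfolding j_def by simp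
  also have "\<dots> < real (q+2) * real P / real m + real P"
  proof -
    have "real (x+1) * real m < real (q+2) * real P" using key by (metis of_nat_less_iff of_nat_mult)
    then have "real (x+1) < real (q+2) * real P / real m" using assms(2) by (simp add: field_simps)
    then show ?thesis by simp
  qed
  also have "\<dots> \<le> (2^(L+1)+4) * real P / real m + real P"
  proof -
    have "real (q+2) \<le> 2^(L+1)+4" using q2 by (metis of_nat_le_iff of_nat_add of_nat_numeral of_nat_power)
    then show ?thesis using assms(2) by (simp add: divide_right_mono mult_right_mono)
  qed
  also have "\<dots> = (1 + (2 ^ (L+1) + 4) / real m) * real P" by (simp add: field_simps)
  finally show ?thesis using Pr by simp
qed

end
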